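(* Define the relation $\succeq^1$ on $\mathcal{A}$ by $\mathbf{A}\succeq^1\mathbf{B}\iff\nu(\mathbf{A})\ge\nu(\mathbf{B})$, where for $\mathbf{A}=[a_{ij}]$ of size $n$, $\nu(\mathbf{A})=\min_{1\le i<j<k\le n}\max\{a_{ij}a_{jk}/a_{ik},\ a_{ik}/(a_{ij}a_{jk})\}$. Then $\succeq^1$ is an inconsistency ranking that satisfies IIP, HTE, SI, MON and RED, but does not satisfy PR.
   Context: A pairwise comparison matrix of size $n$ is a matrix $\mathbf{A}=[a_{ij}]\in\mathbb{R}^{n\times n}$ with all entries positive and $a_{ji}=1/a_{ij}$ for all $i,j$. Let $\mathcal{A}$ denote the set of all pairwise comparison matrices of all sizes $n\ge 3$. For $\mathbf{A}\in\mathcal{A}$ of size $n$ and $3\le m\le n$, a submatrix of $\mathbf{A}$ is a matrix $\mathbf{B}=[b_{ij}]$ of size $m$ with $b_{ij}=a_{\sigma(i)\sigma(j)}$ for some strictly increasing map $\sigma:\{1,\dots,m\}\to\{1,\dots,n\}$. A triad is a pairwise comparison matrix of size $3$; a triad of $\mathbf{A}$ is a submatrix of $\mathbf{A}$ of size $3$ (when $n=3$, $\mathbf{A}$ is its own unique triad). A triad $\mathbf{T}$ is written $\mathbf{T}=(t_1;t_2;t_3)$, meaning $t_{12}=t_1$, $t_{13}=t_2$, $t_{23}=t_3$ (the remaining entries are determined by reciprocity); $\mathbf{T}^\top$ denotes its transpose, i.e. the triad $(1/t_1;1/t_2;1/t_3)$. An inconsistency ranking is a complete and transitive binary relation $\succeq$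 on $\mathcal{A}$; $\mathbf{A}\sim\mathbf{B}$ means $\mathbf{A}\succeq\mathbf{B}$ and $\mathbf{B}\succeq\mathbf{A}$; $\mathbf{A}\preceq\mathbf{B}$ means $\mathbf{B}\succeq\mathbf{A}$. Properties of an inconsistency ranking $\succeq$: (PR) for all $s_2,t_2\ge 1$: $(1;s_2;1)\succeq(1;t_2;1)\iff s_2\le t_2$. (IIP) $\mathbf{T}\sim\mathbf{T}^\top$ for every triad $\mathbf{T}$. (HTE) $(1;t_2;t_3)\sim(1;t_2/t_3;1)$ for all $t_2,t_3>0$. (SI) $(t_1;t_2;t_3)\sim(kt_1;k^2t_2;kt_3)$ for all $t_1,t_2,t_3>0$ and all $k>0$. (MON) $\mathbf{A}\preceq\mathbf{T}$ for every $\mathbf{A}\in\mathcal{A}$ and every triad $\mathbf{T}$ of $\mathbf{A}$. (RED) every $\mathbf{A}\in\mathcal{A}$ has a triad $\mathbf{T}$ with $\mathbf{A}\sim\mathbf{T}$. *)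

theory Defs
  imports Complex_Main
begin

text \<open>A matrix of size n is represented as a pair (n, a) with entries a i j for
  0-based indices i, j < n.  To make the representation canonical, entries outside
  the index range are required to be 1.\<close>

type_synonym pcm = "nat \<times> (nat \<Rightarrow> nat \<Rightarrow> real)"

definition pcm_set :: "pcm set" where
  "pcm_set = {(n, a). 3 \<le> n \<and>
      (\<forall>i<n. \<forall>j<n. 0 < a i j \<and> a j i = 1 / a i j) \<and>
      (\<forall>i j. \<not> (i < n \<and> j < n) \<longrightarrow> a i j = 1)}"

definition triad :: "real \<Rightarrow> real \<Rightarrow> real \<Rightarrow> pcm" where
  "triad t1 t2 t3 = (3, \<lambda>i j.
      if i = 0 \<and> j = 1 then t1 else if i = 1 \<and> j = 0 then 1 / t1
      else if i = 0 \<and> j = 2 then t2 else if i = 2 \<and> j = 0 then 1 / t2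
      else if i = 1 \<and> j = 2 then t3 else if i = 2 \<and> j = 1 then 1 / t3
      else 1)"

definition submatrix :: "pcm \<Rightarrow> nat \<Rightarrow> (nat \<Rightarrow> nat) \<Rightarrow> pcm" where
  "submatrix A m \<sigma> = (m, \<lambda>i j. if i < m \<and> j < m then snd A (\<sigma> i) (\<sigma> j) else 1)"

definition triads_of :: "pcm \<Rightarrow> pcm set" where
  "triads_of A = {submatrix A 3 \<sigma> | \<sigma>.
      strict_mono_on {..<3} \<sigma> \<and> (\<forall>i<3. \<sigma> i < fst A)}"

definition inconsistency_ranking :: "(pcm \<Rightarrow> pcm \<Rightarrow> bool) \<Rightarrow> bool" where
  "inconsistency_ranking R \<longleftrightarrow>
     (\<forall>A\<in>pcm_set. \<forall>B\<in>pcm_set. R A B \<or> R B A) \<and>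
     (\<forall>A\<in>pcm_set. \<forall>B\<in>pcm_set. \<forall>C\<in>pcm_set. R A B \<longrightarrow> R B C \<longrightarrow> R A C)"

definition rsim :: "(pcm \<Rightarrow> pcm \<Rightarrow> bool) \<Rightarrow> pcm \<Rightarrow> pcm \<Rightarrow> bool" where
  "rsim R A B \<longleftrightarrow> R A B \<and> R B A"

definition PR :: "(pcm \<Rightarrow> pcm \<Rightarrow> bool) \<Rightarrow> bool" where
  "PR R \<longleftrightarrow> (\<forall>s2 t2. 1 \<le> s2 \<longrightarrow> 1 \<le> t2 \<longrightarrow>
       (R (triad 1 s2 1) (triad 1 t2 1) \<longleftrightarrow> s2 \<le> t2))"

definition IIP :: "(pcm \<Rightarrow> pcm \<Rightarrow> bool) \<Rightarrow> bool" where
  "IIP R \<longleftrightarrow> (\<forall>t1 t2 t3. 0 < t1 \<longrightarrow> 0 < t2 \<longrightarrow> 0 < t3 \<longrightarrow>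
       rsim R (triad t1 t2 t3) (triad (1/t1) (1/t2) (1/t3)))"

definition HTE :: "(pcm \<Rightarrow> pcm \<Rightarrow> bool) \<Rightarrow> bool" where
  "HTE R \<longleftrightarrow> (\<forall>t2 t3. 0 < t2 \<longrightarrow> 0 < t3 \<longrightarrow>
       rsim R (triad 1 t2 t3) (triad 1 (t2 / t3) 1))"

definition SI :: "(pcm \<Rightarrow> pcm \<Rightarrow> bool) \<Rightarrow> bool" where
  "SI R \<longleftrightarrow> (\<forall>t1 t2 t3 k. 0 < t1 \<longrightarrow> 0 < t2 \<longrightarrow> 0 < t3 \<longrightarrow> 0 < k \<longrightarrow>
       rsim R (triad t1 t2 t3) (triad (k * t1) (k^2 * t2) (k * t3)))"

definition MON :: "(pcm \<Rightarrow> pcm \<Rightarrow> bool) \<Rightarrow> bool" where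
  "MON R \<longleftrightarrow> (\<forall>A\<in>pcm_set. \<forall>T\<in>triads_of A. R T A)"

definition RED :: "(pcm \<Rightarrow> pcm \<Rightarrow> bool) \<Rightarrow> bool" where
  "RED R \<longleftrightarrow> (\<forall>A\<in>pcm_set. \<exists>T\<in>triads_of A. rsim R A T)"

definition nu :: "pcm \<Rightarrow> real" where
  "nu A = Min {max (snd A i j * snd A j k / snd A i k) (snd A i k / (snd A i j * snd A j k))
               | i j k. i < j \<and> j < k \<and> k < fst A}"

definition rank1 :: "pcm \<Rightarrow> pcm \<Rightarrow> bool" where
  "rank1 A B \<longleftrightarrow> nu A \<ge> nu B"

end

theory Submission
  imports Defs
begin

definition gv :: "pcm \<Rightarrow> nat \<Rightarrow> nat \<Rightarrow> nat \<Rightarrow> real" where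
  "gv A i j k = max (snd A i j * snd A j k / snd A i k) (snd A i k / (snd A i j * snd A j k))"

lemma nu_set: "{max (snd A i j * snd A j k / snd A i k) (snd A i k / (snd A i j * snd A j k))
               | i j k. i < j \<and> j < k \<and> k < fst A}
   = (\<lambda>(i,j,k). gv A i j k) ` {(i,j,k). i < j \<and> j < k \<and> k < fst A}"
  unfolding gv_def by (auto intro!: image_eqI)

lemma fin3: "finite {(i,j,k). i < j \<and> j < k \<and> k < (n::nat)}"
proof -
  have "{(i,j,k). i < j \<and> j < k \<and> k < (n::nat)} \<subseteq> {..<n} \<times> {..<n} \<times> {..<n}" by auto
  thus ?thesis by (rule finite_subset) auto
qed

lemma nu_le: "i < j \<Longrightarrow> j < k \<Longrightarrow> k < fst A \<Longrightarrow> nu A \<le> gv A i j k"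
  unfolding nu_def nu_set
  apply (rule Min_le)
  using fin3 apply blast
  by force

lemma nu_attained: "3 \<le> fst A \<Longrightarrow> \<exists>i j k. i < j \<and> j < k \<and> k < fst A \<and> nu A = gv A i j k"
proof -
  assume h: "3 \<le> fst A"
  let ?S = "{(i,j,k). i < j \<and> j < k \<and> k < fst A}"
  have ne: "?S \<noteq> {}" using h by (rule_tac ex_in_conv[THEN iffD1], rule_tac x="(0,1,2)" in exI) auto
  have "nu A \<in> (\<lambda>(i,j,k). gv A i j k) ` ?S"
    unfolding nu_def nu_set by (rule Min_in) (use fin3 ne in auto)
  thus ?thesis by auto
qed

lemma nu_sub: "nu (submatrix A 3 \<sigma>) = gv A (\<sigma> 0) (\<sigma> 1) (\<sigma> 2)"
proof -
  have "{(i,j,k). i < j \<and> j < k \<and> k < fst (submatrix A 3 \<sigma>)} = {(0,1,2)}"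
    by (auto simp: submatrix_def)
  thus ?thesis unfolding nu_def nu_set by (simp add: gv_def submatrix_def)
qed

lemma nu_triad: "nu (triad a b c) = max (a * c / b) (b / (a * c))"
proof -
  have "{(i,j,k). i < j \<and> j < k \<and> k < fst (triad a b c)} = {(0,1,2)}"
    by (auto simp: triad_def)
  thus ?thesis unfolding nu_def nu_set by (simp add: gv_def triad_def)
qed

theorem mainTheorem2:
  shows "inconsistency_ranking rank1 \<and> IIP rank1 \<and> HTE rank1 \<and> SI rank1 \<and>
         MON rank1 \<and> RED rank1 \<and> \<not> PR rank1"
proof (intro conjI)
  show "inconsistency_ranking rank1" unfolding inconsistency_ranking_def rank1_def by auto
  show "IIP rank1" unfolding IIP_def rsim_def rank1_def nu_triad
    by (auto simp: field_simps max_def)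
  show "HTE rank1" unfolding HTE_def rsim_def rank1_def nu_triad
    by (auto simp: field_simps max_def)
  show "SI rank1" unfolding SI_def rsim_def rank1_def nu_triad
    by (auto simp: field_simps max_def power2_eq_square)
  show "MON rank1" unfolding MON_def rank1_def triads_of_def
  proof (intro ballI)
    fix A T assume A: "A \<in> pcm_set" and "T \<in> {submatrix A 3 \<sigma> |\<sigma>. strict_mono_on {..<3} \<sigma> \<and> (\<forall>i<3. \<sigma> i < fst A)}"
    then obtain \<sigma> where T: "T = submatrix A 3 \<sigma>" and m: "strict_mono_on {..<3} \<sigma>" and b: "\<forall>i<3. \<sigma> i < fst A" by auto
    have "\<sigma> 0 < \<sigma> 1" "\<sigma> 1 < \<sigma> 2" using m by (auto simp: strict_mono_on_def)
    moreover have "\<sigma> 2 < fst A" using b by auto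
    ultimately show "nu A \<le> nu T" unfolding T nu_sub by (rule nu_le)
  qed
  show "RED rank1" unfolding RED_def rank1_def triads_of_def rsim_def
  proof (intro ballI)
    fix A assume A: "A \<in> pcm_set"
    hence "3 \<le> fst A" by (auto simp: pcm_set_def)
    then obtain i j k where ijk: "i < j" "j < k" "k < fst A" "nu A = gv A i j k" using nu_attained by blast
    define \<sigma> where "\<sigma> = (\<lambda>x::nat. if x = 0 then i else if x = 1 then j else k)"
    have m: "strict_mono_on {..<3} \<sigma>" using ijk unfolding strict_mono_on_def \<sigma>_def
      by (auto simp: less_Suc_eq numeral_3_eq_3)
    have b: "\<forall>x<3. \<sigma> x < fst A" using ijk unfolding \<sigma>_def by auto
    have eq: "nu (submatrix A 3 \<sigma>) = nu A" unfolding nu_sub ijk(4) by (simp add: \<sigma>_def)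
    show "\<exists>T\<in>{submatrix A 3 \<sigma> |\<sigma>. strict_mono_on {..<3} \<sigma> \<and> (\<forall>i<3. \<sigma> i < fst A)}.
             nu T \<le> nu A \<and> nu A \<le> nu T"
      by (rule bexI[where x="submatrix A 3 \<sigma>"]) (use m b eq in auto)
  qed
  show "\<not> PR rank1"
  proof
    assume "PR rank1"
    hence "rank1 (triad 1 1 1) (triad 1 2 1) \<longleftrightarrow> (1::real) \<le> 2" unfolding PR_def by force
    thus False unfolding rank1_def nu_triad by simp
  qed
qed

end
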